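(* Let $q=2^m$ with $m$ a positive integer. Let $\delta\in\mathbb{F}_{q^2}$, $b_1,b_2\in\mathbb{F}_q$ and $b_3\in\mathbb{F}_{q^2}$. Let $i$ be a non-negative integer with $i<2m$, let $j$ be the integer with $0\leq j<m$ and $j\equiv i\pmod m$, and let $d=\gcd(m,j)$. Let $$P(x)=b_1(x^q+x+\delta)^{2^i+q}+b_2(x^q+x+\delta)^{2^i+1}+b_3(x^q+x+\delta)^{2^i}+x,$$ and put $$A=(\delta+\delta^q)(b_1+b_2)+b_3+b_3^q,\quad B=1+(\delta^{2^iq}+\delta^{2^i})(b_1+b_2),$$ $$C=b_1(\delta^{2^iq+1}+\delta^{2^i+q})+b_2(\delta^{2^iq+q}+\delta^{2^i+1})+b_3^q\delta^{2^iq}+b_3\delta^{2^i}.$$ For $y$ define $G(y)=b_1y^{2^i+q}+b_2y^{2^i+1}+b_3y^{2^i}$. Then: (1) If $i\in\{0,m\}$, then $P$ permutes $\mathbb{F}_{q^2}$ if and only if $A+B\neq0$, and in that case $P^{-1}(x)=G\!\left((A+B)^{-1}(x^q+x)+(A+B)^{-1}C+\delta\right)+x$. (2) If $i\notin\{0,m\}$, $A=0$ and $B\neq0$, then $P$ permutes $\mathbb{F}_{q^2}$ and $P^{-1}(x)=G\!\left(B^{-1}(x^q+x)+B^{-1}C+\delta\right)+x$. (3) If $i\notin\{0,m\}$, $A\neq0$ and $B=0$, then $P$ permutes $\mathbb{F}_{q^2}$ and $P^{-1}(x)=G\!\left(A^{-2^{m-j}}(x^q+x)^{2^{m-j}}+(C/A)^{2^{m-j}}+\delta\right)+x$.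 (4) If $i\notin\{0,m\}$ and $AB\neq0$, then $P$ permutes $\mathbb{F}_{q^2}$ if and only if $N_{2^m/2^d}(B/A)\neq1$, and in that case $$P^{-1}(x)=G\!\left(\delta+\frac{N_{2^m/2^d}(B/A)}{1+N_{2^m/2^d}(B/A)}\sum_{k=0}^{m/d-1}\left(\frac{A}{B}\right)^{\frac{2^{(k+1)j}-1}{2^j-1}}\left(\frac{x^q+x}{A}+\frac{C}{A}\right)^{2^{kj}}\right)+x.$$
   Context: For $a\in\mathbb{F}_{2^m}$ and $d\mid m$, $N_{2^m/2^d}(a)=a^{(2^m-1)/(2^d-1)}$ is the norm to $\mathbb{F}_{2^d}$. The compositional inverse of a permutation polynomial $f$ of $\mathbb{F}_{Q}$ is the unique polynomial $f^{-1}$ (modulo $x^Q-x$) with $f(f^{-1}(c))=f^{-1}(f(c))=c$ for all $c\in\mathbb{F}_Q$. The auxiliary notation $G$ is only shorthand for writing out the three-term expression. *)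

theory Defs
  imports Main
begin

definition gf_norm :: "nat \<Rightarrow> nat \<Rightarrow> 'a::field \<Rightarrow> 'a" where
  "gf_norm m d a = a ^ ((2^m - 1) div (2^d - 1))"

definition is_comp_inverse :: "('a \<Rightarrow> 'a) \<Rightarrow> ('a \<Rightarrow> 'a) \<Rightarrow> bool" where
  "is_comp_inverse f g \<longleftrightarrow> (\<forall>c. f (g c) = c \<and> g (f c) = c)"

end

theory Submission
  imports Defs "HOL-Computational_Algebra.Polynomial"
begin


lemma roots_pow_bound:
  fixes c :: "'a::field"
  assumes "0 < n"
  shows "card {x. x ^ n = c} \<le> n"
proof -
  let ?p = "monom 1 n + [:-c:]"
  have deg: "degree ?p = n"
    using assms by (simp add: degree_add_eq_left degree_monom_eq)
  hence "?p \<noteq> 0" using assms by auto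
  hence "card {x. poly ?p x = 0} \<le> degree ?p" by (rule card_poly_roots_bound)
  moreover have "{x. poly ?p x = 0} = {x. x ^ n = c}" by (auto simp: poly_monom)
  ultimately show ?thesis using deg by simp
qed


lemma fiber_card_bound:
  assumes "finite A" and "\<And>y. y \<in> f ` A \<Longrightarrow> card {x\<in>A. f x = y} \<le> K"
  shows "card A \<le> card (f ` A) * K"
proof -
  have eq: "(\<Union>y\<in>f ` A. {x\<in>A. f x = y}) = A" by blast
  have "card A \<le> (\<Sum>y\<in>f ` A. card {x\<in>A. f x = y})"
    using card_UN_le[of "f ` A" "\<lambda>y. {x\<in>A. f x = y}"] assms(1) unfolding eq by simp
  also have "\<dots> \<le> (\<Sum>y\<in>f ` A. K)" by (intro sum_mono assms(2))
  finally show ?thesis by simp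
qed


lemma char2:
  assumes "card (UNIV :: 'a::{field,finite} set) = 2 ^ (2 * m)" "0 < m"
  shows "(2::'a) = 0"
proof -
  let ?h = "\<lambda>x::'a. x + 1"
  have surj: "?h ` UNIV = UNIV"
  proof (rule surjI)
    fix y :: 'a show "?h (y - 1) = y" by simp
  qed
  have inj: "inj ?h" by (rule injI) simp
  have "(\<Sum>x\<in>?h ` UNIV. x) = (\<Sum>x\<in>UNIV. ?h x)"
    using sum.reindex[OF inj, of "\<lambda>x. x"] by (simp add: comp_def)
  hence "(\<Sum>x\<in>(UNIV::'a set). x) = (\<Sum>x\<in>UNIV. x) + of_nat (card (UNIV::'a set))"
    unfolding surj by (simp add: sum.distrib)
  hence "of_nat (card (UNIV::'a set)) = (0::'a)" by simp
  hence "of_nat (2 ^ (2 * m)) = (0::'a)" using assms(1) by simp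
  hence "(2::'a) ^ (2 * m) = 0" by simp
  thus ?thesis by simp
qed

lemma fermat_ff:
  fixes x :: "'a::{field,finite}"
  shows "x ^ card (UNIV :: 'a set) = x"
proof (cases "x = 0")
  case True thus ?thesis by (simp add: power_0_left)
next
  case False
  let ?U = "UNIV - {0::'a}"
  let ?h = "\<lambda>y. x * y"
  have img: "?h ` ?U = ?U"
  proof
    show "?h ` ?U \<subseteq> ?U" using False by auto
    show "?U \<subseteq> ?h ` ?U"
    proof
      fix z assume "z \<in> ?U"
      hence "z = x * (z / x)" "z / x \<in> ?U" using False by auto
      thus "z \<in> ?h ` ?U" by blast
    qed
  qed
  have inj: "inj_on ?h ?U" using False by (simp add: inj_on_def)
  have "(\<Prod>y\<in>?h ` ?U. y) = (\<Prod>y\<in>?U. ?h y)"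
    using prod.reindex[OF inj, of "\<lambda>y. y"] by (simp add: comp_def)
  hence "(\<Prod>y\<in>?U. y) = x ^ card ?U * (\<Prod>y\<in>?U. y)" unfolding img by (simp add: prod.distrib)
  moreover have "(\<Prod>y\<in>?U. y) \<noteq> 0" using prod_zero_iff[of ?U "\<lambda>y. y"] by auto
  ultimately have "x ^ card ?U = 1"
    by (metis mult_cancel_right2)
  moreover have "card (UNIV::'a set) = Suc (card ?U)"
    using card_Suc_Diff1[of "UNIV::'a set" 0] by simp
  ultimately show ?thesis by (metis power_Suc2 mult_1_left)
qed


lemma roots_pow_id_bound:
  fixes dummy :: "'a::field"
  assumes "1 < n"
  shows "card {x::'a. x ^ n = x} \<le> n"
proof -
  let ?p = "monom (1::'a) n + [:0, -1:]"
  have deg: "degree ?p = n"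
    using assms by (subst degree_add_eq_left) (auto simp: degree_monom_eq)
  hence "?p \<noteq> 0" using assms by auto
  hence "card {x. poly ?p x = 0} \<le> degree ?p" by (rule card_poly_roots_bound)
  moreover have "{x. poly ?p x = 0} = {x. x ^ n = x}" by (auto simp: poly_monom)
  ultimately show ?thesis using deg by simp
qed



lemma char2_add_pow:
  fixes x y :: "'a::comm_ring_1"
  assumes "(2::'a) = 0"
  shows "(x + y) ^ (2 ^ k) = x ^ (2 ^ k) + y ^ (2 ^ k)"
proof (induction k)
  case 0 thus ?case by simp
next
  case (Suc k)
  have sq: "(u + v) ^ 2 = u ^ 2 + v ^ 2" for u v :: 'a
  proof -
    have "(u + v) ^ 2 = u ^ 2 + v ^ 2 + 2 * (u * v)" by (simp add: power2_eq_square algebra_simps)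
    thus ?thesis using assms by simp
  qed
  have "(x + y) ^ (2 ^ Suc k) = ((x + y) ^ (2 ^ k)) ^ 2" by (simp add: power_mult[symmetric] mult.commute)
  also have "\<dots> = (x ^ (2 ^ k)) ^ 2 + (y ^ (2 ^ k)) ^ 2" using Suc sq by simp
  also have "\<dots> = x ^ (2 ^ Suc k) + y ^ (2 ^ Suc k)" by (simp add: power_mult[symmetric] mult.commute)
  finally show ?case .
qed

lemma char2_minus:
  fixes x y :: "'a::comm_ring_1"
  assumes "(2::'a) = 0"
  shows "x - y = x + y"
proof -
  have "y + y = 2 * y" by simp
  hence "y + y = 0" using assms by simp
  thus ?thesis by (metis add_diff_cancel_right' diff_add_cancel add.commute add.assoc add_0_right diff_add_eq)
qed

lemma char2_sum_pow:
  fixes f :: "'b \<Rightarrow> 'a::comm_ring_1"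
  assumes "(2::'a) = 0"
  shows "(\<Sum>x\<in>S. f x) ^ (2 ^ k) = (\<Sum>x\<in>S. f x ^ (2 ^ k))"
proof (cases "finite S")
  case True thus ?thesis
    by (induction S rule: finite_induct) (simp_all add: char2_add_pow[OF assms] power_0_left)
next
  case False thus ?thesis by (simp add: power_0_left)
qed

lemma pow2_iter:
  fixes z :: "'a::comm_ring_1"
  assumes "z ^ (2 ^ b) = z"
  shows "z ^ (2 ^ (k * b)) = z"
proof (induction k)
  case 0 thus ?case by simp
next
  case (Suc k)
  have "z ^ (2 ^ (Suc k * b)) = (z ^ (2 ^ (k * b))) ^ (2 ^ b)"
    by (simp add: power_add power_mult[symmetric] mult.commute)
  thus ?case using Suc assms by simp
qed

lemma pow2_mod:
  fixes z :: "'a::comm_ring_1"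
  assumes "z ^ (2 ^ b) = z"
  shows "z ^ (2 ^ a) = z ^ (2 ^ (a mod b))"
proof -
  have "a = (a div b) * b + a mod b" by simp
  hence "z ^ (2 ^ a) = (z ^ (2 ^ ((a div b) * b))) ^ (2 ^ (a mod b))"
    by (metis power_add power_mult)
  thus ?thesis using pow2_iter[OF assms] by simp
qed

lemma pow2_gcd:
  fixes z :: "'a::comm_ring_1"
  shows "z ^ (2 ^ a) = z \<Longrightarrow> z ^ (2 ^ b) = z \<Longrightarrow> z ^ (2 ^ gcd a b) = z"
proof (induction a b rule: gcd_nat_induct)
  case (base m) thus ?case by simp
next
  case (step m n)
  have "z ^ (2 ^ (m mod n)) = z" using pow2_mod[OF step(4), of m] step(3) by simp
  hence "z ^ (2 ^ gcd n (m mod n)) = z" using step by blast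
  thus ?case by (metis gcd.commute gcd_red_nat)
qed

lemma key_ring:
  fixes Z z dp dq dpq d b1 b2 b3 b3q :: "'a::comm_ring_1"
  assumes "(2::'a) = 0"
  shows "(Z + dp) * (b1 * (z + dq) + b2 * (z + d) + b3) + (Z + dpq) * (b1 * (z + d) + b2 * (z + dq) + b3q)
    = ((d + dq) * (b1 + b2) + b3 + b3q) * Z + ((dpq + dp) * (b1 + b2)) * z
      + (b1 * (dpq * d + dp * dq) + b2 * (dpq * dq + dp * d) + b3q * dpq + b3 * dp)"
proof -
  have "(Z + dp) * (b1 * (z + dq) + b2 * (z + d) + b3) + (Z + dpq) * (b1 * (z + d) + b2 * (z + dq) + b3q)
    = ((d + dq) * (b1 + b2) + b3 + b3q) * Z + ((dpq + dp) * (b1 + b2)) * z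
      + (b1 * (dpq * d + dp * dq) + b2 * (dpq * dq + dp * d) + b3q * dpq + b3 * dp) + 2 * (Z * z * (b1 + b2))"
    by (simp add: ring_distribs ac_simps mult_2)
  thus ?thesis using assms by simp
qed



locale ctx =
  fixes m i :: nat and \<delta> b1 b2 b3 :: "'a::{field,finite}" and q j d :: nat
    and A B C :: 'a and P G :: "'a \<Rightarrow> 'a"
  assumes m_pos: "0 < m"
    and card: "card (UNIV :: 'a set) = 2 ^ (2 * m)"
    and b1: "b1 ^ q = b1" and b2: "b2 ^ q = b2"
    and i_lt: "i < 2 * m"
    and q_def: "q = 2 ^ m"
    and j_def: "j = i mod m"
    and d_def: "d = gcd m j"
    and P_def: "P = (\<lambda>x::'a. b1 * (x ^ q + x + \<delta>) ^ (2 ^ i + q) + b2 * (x ^ q + x + \<delta>) ^ (2 ^ i + 1)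
                       + b3 * (x ^ q + x + \<delta>) ^ (2 ^ i) + x)"
    and A_def: "A = (\<delta> + \<delta> ^ q) * (b1 + b2) + b3 + b3 ^ q"
    and B_def: "B = 1 + (\<delta> ^ (2 ^ i * q) + \<delta> ^ (2 ^ i)) * (b1 + b2)"
    and C_def: "C = b1 * (\<delta> ^ (2 ^ i * q + 1) + \<delta> ^ (2 ^ i + q)) + b2 * (\<delta> ^ (2 ^ i * q + q) + \<delta> ^ (2 ^ i + 1))
             + b3 ^ q * \<delta> ^ (2 ^ i * q) + b3 * \<delta> ^ (2 ^ i)"
    and G_def: "G = (\<lambda>y::'a. b1 * y ^ (2 ^ i + q) + b2 * y ^ (2 ^ i + 1) + b3 * y ^ (2 ^ i))"
begin

lemma two: "(2::'a) = 0" using char2[OF card m_pos] .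

lemma minus_plus: "(x::'a) - y = x + y" using char2_minus[OF two] .
lemma uminus_id: "- (x::'a) = x" using minus_plus[of 0 x] by simp
lemma add_self: "(x::'a) + x = 0" using minus_plus[of x x] by simp

lemma padd: "((x::'a) + y) ^ q = x ^ q + y ^ q"
  unfolding q_def using char2_add_pow[OF two] .

lemma padd2: "((x::'a) + y) ^ (2 ^ k) = x ^ (2 ^ k) + y ^ (2 ^ k)"
  using char2_add_pow[OF two] .

lemma qq: "((x::'a) ^ q) ^ q = x"
proof -
  have qq: "q * q = card (UNIV :: 'a set)" unfolding card q_def by (metis mult_2 power_add)
  have "((x::'a) ^ q) ^ q = x ^ (q * q)" by (simp only: power_mult)
  thus ?thesis using fermat_ff[of x] qq by metis
qed

lemma q_pos: "0 < q" by (simp add: q_def)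

definition Fq :: "'a set" where "Fq = {z. z ^ q = z}"

lemma tr_Fq: "((x::'a) ^ q + x) ^ q = x ^ q + x"
  by (simp add: padd qq add.commute)

lemma pow_comm: "((x::'a) ^ a) ^ b = (x ^ b) ^ a"
  by (simp add: power_mult[symmetric] mult.commute)

lemma pow2i_q: "((x::'a) ^ (2 ^ i)) ^ q = x ^ (2 ^ i * q)"
  by (simp add: power_mult)

lemma pow2iq_q: "((x::'a) ^ (2 ^ i * q)) ^ q = x ^ (2 ^ i)"
  by (simp add: power_mult qq)

lemma A_Fq: "A ^ q = A"
  unfolding A_def by (simp add: padd power_mult_distrib qq b1 b2 ac_simps)

lemma B_Fq: "B ^ q = B"
  unfolding B_def by (simp only: padd power_mult_distrib pow2i_q pow2iq_q b1 b2 power_one) (simp add: ac_simps)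

lemma C_tr: "C = (\<delta> ^ (2 ^ i) * (b1 * \<delta> ^ q + b2 * \<delta> + b3)) ^ q + \<delta> ^ (2 ^ i) * (b1 * \<delta> ^ q + b2 * \<delta> + b3)"
  unfolding C_def by (simp add: padd power_mult_distrib pow2i_q qq b1 b2 power_add ring_distribs ac_simps)

lemma C_Fq: "C ^ q = C"
  using tr_Fq[of "\<delta> ^ (2 ^ i) * (b1 * \<delta> ^ q + b2 * \<delta> + b3)"] by (simp only: C_tr[symmetric])

lemma key:
  assumes z: "z ^ q = z"
  shows "G (z + \<delta>) + (G (z + \<delta>)) ^ q = A * z ^ (2 ^ i) + (B + 1) * z + C"
proof -
  let ?y = "z + \<delta>"
  let ?p = "2 ^ i :: nat"
  have h1: "?y ^ ?p = z ^ ?p + \<delta> ^ ?p" by (rule padd2)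
  have h2: "?y ^ q = z + \<delta> ^ q" using z by (simp add: padd)
  have "G ?y = ?y ^ ?p * (b1 * ?y ^ q + b2 * ?y + b3)"
    unfolding G_def by (simp add: power_add algebra_simps)
  hence hG: "G ?y = (z ^ ?p + \<delta> ^ ?p) * (b1 * (z + \<delta> ^ q) + b2 * (z + \<delta>) + b3)"
    using h1 h2 by simp
  have zp: "(z ^ ?p) ^ q = z ^ ?p" using z pow_comm by metis
  have zp': "z ^ (?p * q) = z ^ ?p" using zp pow2i_q by simp
  have "(G ?y) ^ q = (z ^ ?p + \<delta> ^ (?p * q)) * (b1 * (z + \<delta>) + b2 * (z + \<delta> ^ q) + b3 ^ q)"
    unfolding hG by (simp add: padd power_mult_distrib zp' pow2i_q z qq b1 b2)
  hence "G ?y + (G ?y) ^ q = (z ^ ?p + \<delta> ^ ?p) * (b1 * (z + \<delta> ^ q) + b2 * (z + \<delta>) + b3)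
     + (z ^ ?p + \<delta> ^ (?p * q)) * (b1 * (z + \<delta>) + b2 * (z + \<delta> ^ q) + b3 ^ q)"
    using hG by simp
  also have "\<dots> = ((\<delta> + \<delta> ^ q) * (b1 + b2) + b3 + b3 ^ q) * z ^ ?p + ((\<delta> ^ (?p * q) + \<delta> ^ ?p) * (b1 + b2)) * z
      + (b1 * (\<delta> ^ (?p * q) * \<delta> + \<delta> ^ ?p * \<delta> ^ q) + b2 * (\<delta> ^ (?p * q) * \<delta> ^ q + \<delta> ^ ?p * \<delta>)
         + b3 ^ q * \<delta> ^ (?p * q) + b3 * \<delta> ^ ?p)"
    by (rule key_ring[OF two])
  also have "\<dots> = A * z ^ (2 ^ i) + (B + 1) * z + C"
  proof -
    have "B + 1 = (\<delta> ^ (?p * q) + \<delta> ^ ?p) * (b1 + b2)"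
      unfolding B_def using add_self[of 1] by (simp add: algebra_simps)
    thus ?thesis unfolding A_def C_def by (simp add: power_add ac_simps)
  qed
  finally show ?thesis .
qed

definition L :: "'a \<Rightarrow> 'a" where "L z = A * z ^ (2 ^ i) + B * z"

lemma P_eq: "P x = G (x ^ q + x + \<delta>) + x"
  unfolding P_def G_def by simp

lemma tr_P: "(P x) ^ q + P x = L (x ^ q + x) + C"
proof -
  let ?z = "x ^ q + x"
  have "(P x) ^ q + P x = (G (?z + \<delta>) + (G (?z + \<delta>)) ^ q) + ?z"
    unfolding P_eq by (simp add: padd algebra_simps)
  also have "\<dots> = A * ?z ^ (2 ^ i) + (B + 1) * ?z + C + ?z"
    using key[OF tr_Fq] by simp
  also have "\<dots> = L ?z + C"
    unfolding L_def using add_self[of ?z] by (simp add: algebra_simps)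
  finally show ?thesis .
qed

lemma inverse_from_S:
  assumes S: "\<And>c. (S c) ^ q = S c" "\<And>c. L (S c) + C = c ^ q + c"
  shows "bij P \<and> is_comp_inverse P (\<lambda>c. G (S c + \<delta>) + c)"
proof -
  have PQ: "P (G (S c + \<delta>) + c) = c" for c
  proof -
    let ?s = "S c"
    let ?x = "G (?s + \<delta>) + c"
    have "?x ^ q + ?x = (G (?s + \<delta>) + (G (?s + \<delta>)) ^ q) + (c ^ q + c)"
      by (simp add: padd algebra_simps)
    also have "\<dots> = (A * ?s ^ (2 ^ i) + (B + 1) * ?s + C) + (L ?s + C)"
      using key[OF S(1)] S(2) by simp
    also have "\<dots> = ?s + (A * ?s ^ (2 ^ i) + A * ?s ^ (2 ^ i)) + (B * ?s + B * ?s) + (C + C)"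
      unfolding L_def by (simp add: algebra_simps)
    also have "\<dots> = ?s" by (simp add: add_self)
    finally have "?x ^ q + ?x = ?s" .
    hence "P ?x = G (?s + \<delta>) + ?x" using P_eq by simp
    also have "\<dots> = c" by (simp add: add.assoc[symmetric] add_self)
    finally show ?thesis .
  qed
  hence "surj P" by (rule surjI)
  hence inj: "inj P" using finite_UNIV_surj_inj[of P] by simp
  have "G (S (P c) + \<delta>) + P c = c" for c
    using PQ[of "P c"] inj by (simp add: inj_eq)
  thus ?thesis using PQ inj \<open>surj P\<close> unfolding is_comp_inverse_def bij_def by blast
qed

end


context ctx
begin

lemma q_gt1: "1 < q" using m_pos unfolding q_def by (intro one_less_power) auto

lemma Fq_finite: "finite Fq" by simp

lemma Fq_card_le: "card Fq \<le> q"
  unfolding Fq_def using roots_pow_id_bound[OF q_gt1] by simp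

lemma card_univ: "card (UNIV :: 'a set) = q * q"
  unfolding card q_def by (metis mult_2 power_add)

lemma tr_img: "(\<lambda>x::'a. x ^ q + x) ` UNIV = Fq" and Fq_card: "card Fq = q"
proof -
  let ?t = "\<lambda>x::'a. x ^ q + x"
  have sub: "?t ` UNIV \<subseteq> Fq" unfolding Fq_def using tr_Fq by auto
  have fib: "card {x\<in>UNIV. ?t x = y} \<le> card Fq" if "y \<in> ?t ` UNIV" for y
  proof -
    obtain x0 where y: "y = ?t x0" using \<open>y \<in> ?t ` UNIV\<close> by auto
    have "inj_on (\<lambda>x. x + x0) {x\<in>UNIV. ?t x = y}" by (auto simp: inj_on_def)
    moreover have "(\<lambda>x. x + x0) ` {x\<in>UNIV. ?t x = y} \<subseteq> Fq"
    proof
      fix w assume "w \<in> (\<lambda>x. x + x0) ` {x\<in>UNIV. ?t x = y}"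
      then obtain x where w: "w = x + x0" and tx: "x ^ q + x = x0 ^ q + x0" using y by auto
      have "w ^ q = x ^ q + x0 ^ q" using w padd by simp
      also have "\<dots> = x + x0"
      proof -
        have "x ^ q + x0 ^ q = (x ^ q + x) + (x + x0 ^ q)" by (simp add: add.assoc[symmetric] add_self add.commute)
        also have "\<dots> = (x0 ^ q + x0) + (x + x0 ^ q)" using tx by simp
        also have "\<dots> = x + x0 + (x0 ^ q + x0 ^ q)" by (simp add: ac_simps)
        finally show ?thesis by (simp add: add_self)
      qed
      finally show "w \<in> Fq" using w unfolding Fq_def by simp
    qed
    ultimately show ?thesis by (intro card_inj_on_le) auto
  qed
  have "card (UNIV::'a set) \<le> card (?t ` UNIV) * card Fq"
    by (rule fiber_card_bound) (use fib in auto)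
  hence main: "q * q \<le> card (?t ` UNIV) * card Fq" using card_univ by simp
  have c1: "card (?t ` UNIV) \<le> card Fq" using sub by (intro card_mono) auto
  have c2: "card Fq \<le> q" by (rule Fq_card_le)
  have "card (?t ` UNIV) * card Fq \<le> card (?t ` UNIV) * q" by (rule mult_le_mono2[OF c2])
  hence "q * q \<le> card (?t ` UNIV) * q" using main by linarith
  hence "q \<le> card (?t ` UNIV)" using q_gt1 by simp
  hence eqc: "card (?t ` UNIV) = card Fq" "card Fq = q" using c1 c2 by auto
  show "?t ` UNIV = Fq" using sub eqc by (intro card_subset_eq) auto
  show "card Fq = q" using eqc by simp
qed

lemma bij_inj_L:
  assumes "bij P"
  shows "inj_on L Fq"
proof -
  let ?t = "\<lambda>x::'a. x ^ q + x"
  have "(\<lambda>x. ?t (P x)) ` UNIV = ?t ` (P ` UNIV)" by auto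
  also have "\<dots> = Fq" using assms tr_img by (simp add: bij_def)
  finally have e1: "(\<lambda>x. ?t (P x)) ` UNIV = Fq" .
  have "(\<lambda>x. ?t (P x)) ` UNIV = (\<lambda>z. L z + C) ` (?t ` UNIV)"
    using tr_P by (auto simp: image_image)
  also have "\<dots> = (\<lambda>w. w + C) ` (L ` Fq)" using tr_img by (simp add: image_image)
  finally have "card Fq = card ((\<lambda>w. w + C) ` (L ` Fq))" using e1 by simp
  also have "\<dots> \<le> card (L ` Fq)" by (rule card_image_le) simp
  also have "\<dots> \<le> card Fq" by (rule card_image_le) simp
  finally have "card (L ` Fq) = card Fq" by simp
  thus ?thesis by (intro eq_card_imp_inj_on) simp_all
qed

lemma pow_i_j: "z ^ q = z \<Longrightarrow> z ^ (2 ^ i) = (z::'a) ^ (2 ^ j)"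
  using pow2_mod[of z m i] unfolding q_def j_def by simp

lemma Fq_simps:
  "(x ^ q + x) ^ q = x ^ q + x"
  "(x * y) ^ q = x ^ q * y ^ q" "(x + y) ^ q = x ^ q + y ^ q"
  "(inverse x) ^ q = inverse (x ^ q)" "(x / y) ^ q = x ^ q / y ^ q"
  "((x::'a) ^ k) ^ q = (x ^ q) ^ k"
  for x y :: 'a
  by (rule tr_Fq, rule power_mult_distrib, rule padd, rule power_inverse, rule power_divide, rule pow_comm)

end


context ctx
begin

lemma Fq_add: "x ^ q = x \<Longrightarrow> y ^ q = y \<Longrightarrow> ((x::'a) + y) ^ q = x + y" by (simp add: padd)
lemma Fq_mult: "x ^ q = x \<Longrightarrow> y ^ q = y \<Longrightarrow> ((x::'a) * y) ^ q = x * y" by (simp add: power_mult_distrib)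
lemma Fq_inv: "x ^ q = x \<Longrightarrow> (inverse (x::'a)) ^ q = inverse x" by (simp add: power_inverse)
lemma Fq_div: "x ^ q = x \<Longrightarrow> y ^ q = y \<Longrightarrow> ((x::'a) / y) ^ q = x / y" by (simp add: power_divide)
lemma Fq_pow: "x ^ q = x \<Longrightarrow> ((x::'a) ^ k) ^ q = x ^ k" by (metis pow_comm)
lemma Fq_one: "(1::'a) ^ q = 1" by simp
lemma Fq_sum: "(\<And>k. k \<in> K \<Longrightarrow> (f k) ^ q = f k) \<Longrightarrow> ((\<Sum>k\<in>K. f k)::'a) ^ q = (\<Sum>k\<in>K. f k)"
  unfolding q_def by (simp add: char2_sum_pow[OF two])

lemma linear_inverse:
  assumes X: "X \<noteq> 0" "X ^ q = X" and LX: "\<And>z. z ^ q = z \<Longrightarrow> L z = X * z"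
  shows "bij P \<and> is_comp_inverse P (\<lambda>x. G (inverse X * (x ^ q + x) + inverse X * C + \<delta>) + x)"
proof -
  let ?S = "\<lambda>c. inverse X * (c ^ q + c) + inverse X * C"
  have S1: "(?S c) ^ q = ?S c" for c
    by (intro Fq_add Fq_mult Fq_inv X tr_Fq C_Fq)
  have S2: "L (?S c) + C = c ^ q + c" for c
  proof -
    have "L (?S c) = X * ?S c" by (rule LX[OF S1])
    also have "\<dots> = (X * inverse X) * (c ^ q + c) + (X * inverse X) * C" by (simp add: ring_distribs mult.assoc)
    also have "\<dots> = c ^ q + c + C" using X by simp
    finally show ?thesis by (simp add: add.assoc add_self)
  qed
  show ?thesis using inverse_from_S[of ?S, OF S1 S2] by (simp add: add.assoc)
qed

lemma case1:
  assumes "i \<in> {0, m}"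
  shows "(bij P \<longleftrightarrow> A + B \<noteq> 0) \<and>
         (A + B \<noteq> 0 \<longrightarrow> is_comp_inverse P
            (\<lambda>x. G (inverse (A + B) * (x ^ q + x) + inverse (A + B) * C + \<delta>) + x))"
proof -
  have ii: "z ^ (2 ^ i) = z" if "z ^ q = z" for z :: 'a
    using assms that q_def by auto
  have LX: "L z = (A + B) * z" if "z ^ q = z" for z
    unfolding L_def using ii[OF that] by (simp add: ring_distribs)
  have XF: "(A + B) ^ q = A + B" by (intro Fq_add A_Fq B_Fq)
  have "bij P \<Longrightarrow> A + B \<noteq> 0"
  proof
    assume "bij P" "A + B = 0"
    hence "inj_on L Fq" by (intro bij_inj_L)
    moreover have "(0::'a) \<in> Fq" "(1::'a) \<in> Fq" unfolding Fq_def using q_gt1 by auto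
    moreover have "L 0 = L 1" using LX[of 0] LX[of 1] \<open>A + B = 0\<close> q_gt1 by simp
    ultimately show False by (metis inj_on_def zero_neq_one)
  qed
  thus ?thesis using linear_inverse[OF _ XF LX] by blast
qed

lemma case2:
  assumes "A = 0" "B \<noteq> 0"
  shows "bij P \<and> is_comp_inverse P (\<lambda>x. G (inverse B * (x ^ q + x) + inverse B * C + \<delta>) + x)"
proof -
  have LX: "L z = B * z" if "z ^ q = z" for z
    unfolding L_def using assms by simp
  show ?thesis using linear_inverse[OF assms(2) B_Fq LX] .
qed

lemma j_facts:
  assumes "i \<notin> {0, m}"
  shows "0 < j" "j < m"
proof -
  show "j < m" unfolding j_def using m_pos by simp
  show "0 < j"
  proof (rule ccontr)
    assume "\<not> 0 < j"
    hence "i mod m = 0" unfolding j_def by simp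
    then obtain k where "i = m * k" by auto
    moreover have "k < 2" using i_lt \<open>i = m * k\<close> m_pos by (metis mult.commute mult_less_cancel2)
    ultimately have "i = 0 \<or> i = m" by (cases k) (auto simp: less_Suc_eq)
    thus False using assms by simp
  qed
qed

lemma case3:
  assumes "i \<notin> {0, m}" "A \<noteq> 0" "B = 0"
  shows "bij P \<and> is_comp_inverse P
          (\<lambda>x. G (inverse A ^ (2 ^ (m - j)) * (x ^ q + x) ^ (2 ^ (m - j)) + (C / A) ^ (2 ^ (m - j)) + \<delta>) + x)"
proof -
  let ?e = "2 ^ (m - j) :: nat"
  let ?w = "\<lambda>c. (c ^ q + c + C) / A"
  let ?S = "\<lambda>c. inverse A ^ ?e * (c ^ q + c) ^ ?e + (C / A) ^ ?e"
  have Seq: "?S c = (?w c) ^ ?e" for c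
    by (simp add: divide_inverse ring_distribs padd2 power_mult_distrib mult.commute)
  have w1: "(?w c) ^ q = ?w c" for c by (intro Fq_div Fq_add tr_Fq C_Fq A_Fq)
  have S1: "(?S c) ^ q = ?S c" for c unfolding Seq by (intro Fq_pow w1)
  have jm: "j < m" using j_facts[OF assms(1)] by simp
  have S2: "L (?S c) + C = c ^ q + c" for c
  proof -
    have "(?S c) ^ (2 ^ i) = (?S c) ^ (2 ^ j)" by (rule pow_i_j[OF S1])
    also have "\<dots> = (?w c) ^ (?e * 2 ^ j)" unfolding Seq by (simp add: power_mult)
    also have "?e * 2 ^ j = q" unfolding q_def using jm by (simp add: power_add[symmetric])
    finally have "(?S c) ^ (2 ^ i) = ?w c" using w1 by simp
    hence "L (?S c) = A * ?w c" unfolding L_def using assms(3) by simp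
    also have "\<dots> = c ^ q + c + C" using assms(2) by simp
    finally show ?thesis by (simp add: add.assoc add_self)
  qed
  show ?thesis using inverse_from_S[of ?S, OF S1 S2] by (simp add: add.assoc)
qed

end


lemma geom2:
  "(\<Sum>l<n. 2 ^ (l * c)) * (2 ^ c - 1) + 1 = (2::nat) ^ (n * c)"
proof (induction n)
  case 0 thus ?case by simp
next
  case (Suc n)
  obtain y where y: "(2::nat) ^ c = Suc y" by (metis not0_implies_Suc power_not_zero zero_neq_numeral)
  have "(\<Sum>l<Suc n. (2::nat) ^ (l * c)) * (2 ^ c - 1) + 1 = ((\<Sum>l<n. 2 ^ (l * c)) * (2 ^ c - 1) + 1) + 2 ^ (n * c) * (2 ^ c - 1)"
    by (simp add: add_mult_distrib)
  also have "\<dots> = 2 ^ (n * c) * 2 ^ c" using Suc y by (simp add: algebra_simps)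
  also have "\<dots> = 2 ^ (Suc n * c)" by (simp add: power_add mult.commute)
  finally show ?case .
qed

lemma geom2_div:
  assumes "0 < c"
  shows "(2 ^ (n * c) - 1) div (2 ^ c - 1) = (\<Sum>l<n. (2::nat) ^ (l * c))"
proof -
  have pos: "0 < (2::nat) ^ c - 1" using one_less_power[of "2::nat" c] assms by simp
  have "2 ^ (n * c) - 1 = (\<Sum>l<n. (2::nat) ^ (l * c)) * (2 ^ c - 1)" using geom2[where n=n and c=c] by linarith
  thus ?thesis using pos by simp
qed

lemma geom2_dvd:
  assumes "d dvd j"
  shows "((2::nat) ^ d - 1) dvd (2 ^ j - 1)"
proof -
  obtain k where "j = k * d" using assms by (metis dvd_def mult.commute)
  thus ?thesis using geom2[where n=k and c=d] by (metis add_diff_cancel_right' dvd_triv_right)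
qed

lemma aux_cancel:
  fixes n j' l l' :: nat
  assumes cop: "coprime n j'" and l: "l < n" and l': "l' < n" and e: "(l * j') mod n = (l' * j') mod n"
    and le: "l \<le> l'"
  shows "l = l'"
proof -
  have "n dvd l' * j' - l * j'" using e le mod_eq_dvd_iff_nat[of "l * j'" "l' * j'" n] by (simp add: mult_le_mono1)
  hence "n dvd (l' - l) * j'" by (simp add: diff_mult_distrib)
  hence dv: "n dvd (l' - l)" using cop coprime_dvd_mult_left_iff[of n j' "l' - l"] by simp
  have "l' - l = 0"
  proof (rule ccontr)
    assume "l' - l \<noteq> 0"
    hence "n \<le> l' - l" using dvd_imp_le[OF dv] by simp
    thus False using l' by simp
  qed
  thus ?thesis using le by simp
qed

lemma aux:
  fixes n j' l l' :: nat
  assumes cop: "coprime n j'" and l: "l < n" and l': "l' < n" and e: "(l * j') mod n = (l' * j') mod n"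
  shows "l = l'"
proof (cases "l \<le> l'")
  case True thus ?thesis using aux_cancel[OF cop l l' e] by simp
next
  case False thus ?thesis using aux_cancel[OF cop l' l e[symmetric]] by simp
qed

lemma reindex_perm:
  fixes m j :: nat
  assumes m: "0 < m" and d: "d = gcd m j" and n: "n = m div d"
  shows "bij_betw (\<lambda>l. ((l * j) mod m) div d) {..<n} {..<n}"
    and "\<And>l. (l * j) mod m = ((l * j) mod m) div d * d"
proof -
  have d0: "0 < d" using d m by simp
  have dm: "d dvd m" and dj: "d dvd j" using d by auto
  have mn: "m = n * d" using n dm by simp
  let ?h = "\<lambda>l. ((l * j) mod m) div d"
  show dv: "(l * j) mod m = ((l * j) mod m) div d * d" for l
  proof -
    have "d dvd (l * j) mod m" using dm dj by (simp add: dvd_mod)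
    thus ?thesis by simp
  qed
  have into: "?h ` {..<n} \<subseteq> {..<n}"
  proof
    fix x assume "x \<in> ?h ` {..<n}"
    then obtain l where x: "x = ?h l" by auto
    have "(l * j) mod m < n * d" using m mn by simp
    thus "x \<in> {..<n}" using x d0 by (simp add: less_mult_imp_div_less)
  qed
  have cop: "coprime (j div d) n"
    using div_gcd_coprime[of m j] m d n by (simp add: coprime_commute)
  have inj: "inj_on ?h {..<n}"
  proof (rule inj_onI)
    fix l l' assume l: "l \<in> {..<n}" and l': "l' \<in> {..<n}" and e: "?h l = ?h l'"
    have e2: "(l * j) mod m = (l' * j) mod m" using e dv[of l] dv[of l'] by metis
    obtain j' where j': "j = j' * d" using dj by (metis dvd_def mult.commute)
    have jd: "j div d = j'" using j' d0 by simp
    have "(l * j') mod n = (l' * j') mod n"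
    proof -
      have "((l * j') * d) mod (n * d) = ((l' * j') * d) mod (n * d)" using e2 j' mn by (simp add: mult.assoc)
      thus ?thesis using d0 by (simp add: mod_mult_mult2)
    qed
    have cop': "coprime n j'" using cop jd by (simp add: coprime_commute)
    show "l = l'" using aux[OF cop' _ _ \<open>(l * j') mod n = (l' * j') mod n\<close>] l l' by simp
  qed
  have "?h ` {..<n} = {..<n}" by (rule endo_inj_surj) (use into inj in auto)
  thus "bij_betw ?h {..<n} {..<n}" using inj by (simp add: bij_betw_def)
qed

lemma norm_reindex:
  fixes a :: "'a::comm_ring_1"
  assumes m: "0 < m" and d: "d = gcd m j" and n: "n = m div d" and a: "a ^ (2 ^ m) = a"
  shows "a ^ (\<Sum>l<n. 2 ^ (l * j)) = a ^ (\<Sum>k<n. 2 ^ (k * d))"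
proof -
  let ?h = "\<lambda>l. ((l * j) mod m) div d"
  note R = reindex_perm[OF m d n]
  have "a ^ (\<Sum>l<n. 2 ^ (l * j)) = (\<Prod>l<n. a ^ (2 ^ (l * j)))" by (simp add: power_sum)
  also have "\<dots> = (\<Prod>l<n. a ^ (2 ^ (?h l * d)))"
  proof (rule prod.cong[OF refl])
    fix l
    have "a ^ (2 ^ (l * j)) = a ^ (2 ^ ((l * j) mod m))" by (rule pow2_mod[OF a])
    also have "\<dots> = a ^ (2 ^ (?h l * d))" using R(2)[of l] by simp
    finally show "a ^ (2 ^ (l * j)) = a ^ (2 ^ (?h l * d))" .
  qed
  also have "\<dots> = (\<Prod>k<n. a ^ (2 ^ (k * d)))"
    using prod.reindex_bij_betw[OF R(1), of "\<lambda>k. a ^ (2 ^ (k * d))"] by simp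
  also have "\<dots> = a ^ (\<Sum>k<n. 2 ^ (k * d))" by (simp add: power_sum)
  finally show ?thesis .
qed



context ctx
begin

lemma d_pos: "0 < d" unfolding d_def using m_pos by simp
lemma d_dvd: "d dvd m" "d dvd j" unfolding d_def by auto

definition nn :: nat where "nn = m div d"
lemma m_nn: "m = nn * d" unfolding nn_def using d_dvd by simp
lemma nn_pos: "0 < nn" using m_nn m_pos by (metis gr0I mult_0)

definition ee :: nat where "ee = (2 ^ m - 1) div (2 ^ d - 1)"
lemma ee_sum: "ee = (\<Sum>k<nn. 2 ^ (k * d))"
  unfolding ee_def using geom2_div[OF d_pos, of nn] m_nn by (simp add: mult.commute)
lemma ee_mult: "ee * (2 ^ d - 1) = 2 ^ m - 1"
  using geom2[where n=nn and c=d] m_nn ee_sum by (simp add: mult.commute)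

lemma Fq_unit: "z ^ q = z \<Longrightarrow> z \<noteq> 0 \<Longrightarrow> z ^ (2 ^ m - 1) = (1::'a)"
proof -
  assume z: "z ^ q = z" "z \<noteq> 0"
  have "z ^ (2 ^ m - 1) * z = z ^ q" unfolding q_def
    by (metis One_nat_def Suc_pred less_numeral_extra(1) pos2 power_Suc2 zero_less_power)
  thus ?thesis using z by simp
qed

definition ff :: "nat \<Rightarrow> nat" where "ff k = (\<Sum>l<k. 2 ^ (l * j))"

lemma ff_Suc: "ff (Suc k) = 1 + 2 ^ j * ff k"
proof -
  have "ff (Suc k) = 2 ^ (0 * j) + (\<Sum>l<k. 2 ^ (Suc l * j))" unfolding ff_def by (rule sum.lessThan_Suc_shift)
  also have "\<dots> = 1 + 2 ^ j * ff k" unfolding ff_def by (simp add: sum_distrib_left power_add)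
  finally show ?thesis .
qed


lemma ff_pow: "(x::'a) ^ ff (Suc k) = x * (x ^ ff k) ^ (2 ^ j)"
proof -
  have "x ^ ff (Suc k) = x ^ 1 * x ^ (2 ^ j * ff k)" unfolding ff_Suc by (rule power_add)
  also have "2 ^ j * ff k = ff k * 2 ^ j" by (rule mult.commute)
  also have "x ^ (ff k * 2 ^ j) = (x ^ ff k) ^ (2 ^ j)" by (rule power_mult)
  finally show ?thesis by simp
qed

lemma case4_inv:
  assumes i: "i \<notin> {0, m}" and A0: "A \<noteq> 0" and B0: "B \<noteq> 0"
    and N1: "(B / A) ^ ee \<noteq> 1"
  shows "bij P \<and> is_comp_inverse P (\<lambda>c. G ((B / A) ^ ee / (1 + (B / A) ^ ee) *
                 (\<Sum>k<nn. (A / B) ^ ff (Suc k) * ((c ^ q + c) / A + C / A) ^ (2 ^ (k * j))) + \<delta>) + c)"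
proof -
  define a where "a = B / A"
  define b where "b = A / B"
  define N where "N = a ^ ee"
  define cN where "cN = N / (1 + N)"
  have aq: "a ^ q = a" unfolding a_def by (intro Fq_div B_Fq A_Fq)
  have bq: "b ^ q = b" unfolding b_def by (intro Fq_div B_Fq A_Fq)
  have a0: "a \<noteq> 0" using A0 B0 a_def by simp
  have ab: "a * b = 1" using A0 B0 unfolding a_def b_def by simp
  have Aa: "A * a = B" using A0 unfolding a_def by simp
  have Bb: "B * b = A" using B0 unfolding b_def by simp
  have N0: "N \<noteq> 0" using a0 N_def by simp
  have N1': "1 + N \<noteq> 0"
  proof
    assume "1 + N = 0"
    hence "N = - 1" by (simp add: eq_neg_iff_add_eq_0 add.commute)
    thus False using N1 N_def a_def uminus_id[of 1] by simp
  qed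
  have Nq: "N ^ q = N" unfolding N_def by (intro Fq_pow aq)
  have cNq: "cN ^ q = cN" unfolding cN_def by (intro Fq_div Fq_add Fq_one Nq)
  have "N ^ (2 ^ d - 1) = 1"
  proof -
    have "N ^ (2 ^ d - 1) = a ^ (ee * (2 ^ d - 1))" unfolding N_def by (simp add: power_mult)
    also have "\<dots> = 1" using ee_mult Fq_unit[OF aq a0] by simp
    finally show ?thesis .
  qed
  moreover have "(2::nat) ^ d = Suc (2 ^ d - 1)" by simp
  ultimately have Nd: "N ^ (2 ^ d) = N" by (metis power_Suc2 mult_1_left)
  have Nj: "N ^ (2 ^ j) = N"
  proof -
    obtain k where "j = k * d" using d_dvd(2) by (metis dvd_def mult.commute)
    thus ?thesis using pow2_iter[OF Nd] by simp
  qed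
  have cNj: "cN ^ (2 ^ j) = cN" unfolding cN_def by (simp add: power_divide padd2 Nj)
  have am: "a ^ (2 ^ m) = a" using aq q_def by simp
  have aff: "a ^ ff nn = N"
    unfolding ff_def N_def ee_sum using norm_reindex[OF m_pos d_def nn_def am] .
  have bff: "b ^ ff nn = inverse N"
  proof -
    have "b = inverse a" unfolding a_def b_def by simp
    thus ?thesis using aff by (simp add: power_inverse)
  qed
  have bff2: "(b ^ ff k) ^ (2 ^ j) = a * b ^ ff (Suc k)" for k
  proof -
    have "b ^ ff (Suc k) = b * (b ^ ff k) ^ (2 ^ j)" by (rule ff_pow)
    hence "a * b ^ ff (Suc k) = (a * b) * (b ^ ff k) ^ (2 ^ j)" by (simp add: mult.assoc)
    thus ?thesis using ab by simp
  qed
  define v where "v = (\<lambda>c::'a. (c ^ q + c) / A + C / A)"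
  have vq: "(v c) ^ q = v c" for c unfolding v_def by (intro Fq_add Fq_div tr_Fq A_Fq C_Fq)
  have vm: "(v c) ^ (2 ^ m) = v c" for c using vq q_def by simp
  have vnj: "(v c) ^ (2 ^ (nn * j)) = v c" for c
  proof -
    obtain k where "j = k * d" using d_dvd(2) by (metis dvd_def mult.commute)
    hence "nn * j = k * m" using m_nn by simp
    thus ?thesis using pow2_iter[OF vm] by simp
  qed
  have AXY: "A * (X / A + Y / A) = X + Y" for X Y using A0 by (simp add: distrib_left)
  have Av: "A * v c = c ^ q + c + C" for c unfolding v_def by (rule AXY)
  define g where "g = (\<lambda>c k. b ^ ff (Suc k) * (v c) ^ (2 ^ (k * j)))"
  define S where "S = (\<lambda>c. cN * (\<Sum>k<nn. g c k))"
  have gq: "(g c k) ^ q = g c k" for c k unfolding g_def by (intro Fq_mult Fq_pow bq vq)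
  have S1: "(S c) ^ q = S c" for c unfolding S_def
    by (intro Fq_mult cNq Fq_sum gq)
  have gj: "(g c k) ^ (2 ^ j) = a * g c (Suc k)" for c k
  proof -
    have "(g c k) ^ (2 ^ j) = (b ^ ff (Suc k)) ^ (2 ^ j) * ((v c) ^ (2 ^ (k * j))) ^ (2 ^ j)"
      unfolding g_def by (simp add: power_mult_distrib)
    also have "((v c) ^ (2 ^ (k * j))) ^ (2 ^ j) = (v c) ^ (2 ^ (Suc k * j))"
      by (simp add: power_mult[symmetric] power_add mult.commute)
    finally show ?thesis unfolding g_def using bff2[of "Suc k"] by (simp add: mult.assoc)
  qed
  have S2: "L (S c) + C = c ^ q + c" for c
  proof -
    have "(S c) ^ (2 ^ j) = cN ^ (2 ^ j) * (\<Sum>k<nn. (g c k) ^ (2 ^ j))"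
      unfolding S_def by (simp add: power_mult_distrib char2_sum_pow[OF two])
    also have "\<dots> = cN * a * (\<Sum>k<nn. g c (Suc k))" using cNj gj by (simp add: sum_distrib_left mult.assoc)
    finally have Sj: "(S c) ^ (2 ^ j) = cN * a * (\<Sum>k<nn. g c (Suc k))" .
    have tel: "(\<Sum>k<nn. g c (Suc k)) + (\<Sum>k<nn. g c k) = g c nn + g c 0"
    proof -
      have "(\<Sum>k<nn. g c (Suc k)) + (\<Sum>k<nn. g c k) = (\<Sum>k<nn. g c (Suc k) - g c k)"
        by (simp add: sum.distrib minus_plus)
      also have "\<dots> = g c nn - g c 0" by (rule sum_lessThan_telescope)
      finally show ?thesis by (simp add: minus_plus)
    qed
    have g0: "g c 0 = b * v c" unfolding g_def ff_def by simp
    have gn: "g c nn = b * inverse N * v c"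
    proof -
      have "b ^ ff (Suc nn) = b * (b ^ ff nn) ^ (2 ^ j)" by (rule ff_pow)
      also have "\<dots> = b * inverse N" using bff Nj by (simp add: power_inverse)
      finally show ?thesis unfolding g_def using vnj by (simp add: mult.commute)
    qed
    have "L (S c) = A * (S c) ^ (2 ^ j) + B * S c" unfolding L_def using pow_i_j[OF S1] by simp
    also have "\<dots> = A * (cN * a * (\<Sum>k<nn. g c (Suc k))) + B * (cN * (\<Sum>k<nn. g c k))"
      by (simp only: Sj) (simp add: S_def)
    also have "A * (cN * a * (\<Sum>k<nn. g c (Suc k))) = (A * a) * (cN * (\<Sum>k<nn. g c (Suc k)))"
      by (simp add: ac_simps)
    also have "(A * a) * (cN * (\<Sum>k<nn. g c (Suc k))) + B * (cN * (\<Sum>k<nn. g c k))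
       = B * cN * ((\<Sum>k<nn. g c (Suc k)) + (\<Sum>k<nn. g c k))"
      unfolding Aa by (simp add: ring_distribs ac_simps)
    also have "\<dots> = B * cN * (b * inverse N * v c + b * v c)" using tel g0 gn by simp
    also have "\<dots> = (B * b) * v c * (cN * (inverse N + 1))" by (simp add: ring_distribs ac_simps)
    also have "cN * (inverse N + 1) = 1" proof -
      have "N * (1 + N) \<noteq> 0" using N0 N1' by simp
      hence "N + N * N \<noteq> 0" by (simp add: ring_distribs)
      thus ?thesis unfolding cN_def using N0 N1' by (simp add: field_simps)
    qed
    also have "B * b = A" by (rule Bb)
    finally have "L (S c) = c ^ q + c + C" using Av by simp
    thus ?thesis by (simp add: add.assoc add_self)
  qed
  have "bij P \<and> is_comp_inverse P (\<lambda>c. G (S c + \<delta>) + c)" by (rule inverse_from_S[OF S1 S2])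
  moreover have "S = (\<lambda>c. (B / A) ^ ee / (1 + (B / A) ^ ee) *
                 (\<Sum>k<nn. (A / B) ^ ff (Suc k) * ((c ^ q + c) / A + C / A) ^ (2 ^ (k * j))))"
    unfolding S_def g_def cN_def N_def a_def b_def v_def by simp
  ultimately show ?thesis by simp
qed


lemma pow_pred: "(w::'a) ^ (2 ^ k) = w ^ (2 ^ k - 1) * w"
proof -
  have "(2::nat) ^ k = Suc (2 ^ k - 1)" by simp
  thus ?thesis by (metis power_Suc2)
qed

lemma case4_noninj:
  assumes A0: "A \<noteq> 0" and B0: "B \<noteq> 0" and N1: "(B / A) ^ ee = 1" and bij: "bij P"
  shows False
proof -
  define a where "a = B / A"
  have aq: "a ^ q = a" unfolding a_def by (intro Fq_div B_Fq A_Fq)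
  have Aa: "A * a = B" using A0 unfolding a_def by simp
  define Fs where "Fs = Fq - {0}"
  define \<phi> where "\<phi> = (\<lambda>z::'a. z ^ (2 ^ j - 1))"
  define K where "K = {w::'a. w ^ (2 ^ d - 1) = 1}"
  define R where "R = {y::'a. y ^ ee = 1}"
  have d1: "0 < (2::nat) ^ d - 1" using d_pos one_less_power[of "2::nat" d] by simp
  have ee_pos: "0 < ee" using ee_mult q_gt1 q_def by (metis diff_is_0_eq gr0I less_numeral_extra(4) mult_0 not_less one_less_power pos2 m_pos)
  have cardFs: "card Fs = q - 1"
  proof -
    have "0 \<in> Fq" unfolding Fq_def using q_gt1 by simp
    thus ?thesis unfolding Fs_def using Fq_card by simp
  qed
  have cardK: "card K \<le> 2 ^ d - 1" unfolding K_def by (rule roots_pow_bound[OF d1])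
  have cardR: "card R \<le> ee" unfolding R_def by (rule roots_pow_bound[OF ee_pos])
  have fib: "card {z\<in>Fs. \<phi> z = y} \<le> 2 ^ d - 1" if yin: "y \<in> \<phi> ` Fs" for y
  proof -
    obtain z0 where z0: "z0 \<in> Fs" "y = \<phi> z0" using yin by blast
    have z00: "z0 \<noteq> 0" "z0 ^ q = z0" using z0 unfolding Fs_def Fq_def by auto
    have "inj_on (\<lambda>z. z / z0) {z\<in>Fs. \<phi> z = y}" using z00 by (auto simp: inj_on_def)
    moreover have "(\<lambda>z. z / z0) ` {z\<in>Fs. \<phi> z = y} \<subseteq> K"
    proof
      fix w assume "w \<in> (\<lambda>z. z / z0) ` {z\<in>Fs. \<phi> z = y}"
      then obtain z where z: "z \<in> Fs" "\<phi> z = y" "w = z / z0" by auto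
      have zz: "z \<noteq> 0" "z ^ q = z" using z unfolding Fs_def Fq_def by auto
      have w0: "w \<noteq> 0" using zz z00 z by simp
      have wq: "w ^ q = w" using z(3) by (simp add: Fq_div zz z00)
      have "w ^ (2 ^ j - 1) = \<phi> z / \<phi> z0" unfolding \<phi>_def z(3) by (simp add: power_divide)
      hence w1: "w ^ (2 ^ j - 1) = 1" using z z0 z00 unfolding \<phi>_def by simp
      have wj: "w ^ (2 ^ j) = w" using pow_pred[of w j] w1 by simp
      have wm: "w ^ (2 ^ m) = w" using wq q_def by simp
      have wd: "w ^ (2 ^ d) = w" unfolding d_def by (rule pow2_gcd[OF wm wj])
      hence "w ^ (2 ^ d - 1) * w = 1 * w" using pow_pred[of w d] by simp
      hence "w ^ (2 ^ d - 1) = 1" using w0 by (metis mult_cancel_right)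
      thus "w \<in> K" unfolding K_def by simp
    qed
    ultimately have "card {z\<in>Fs. \<phi> z = y} \<le> card K" by (intro card_inj_on_le) (auto simp: K_def)
    thus ?thesis using cardK by simp
  qed
  have "card Fs \<le> card (\<phi> ` Fs) * (2 ^ d - 1)"
    by (rule fiber_card_bound) (use fib in \<open>auto simp: Fs_def\<close>)
  hence le1: "ee * (2 ^ d - 1) \<le> card (\<phi> ` Fs) * (2 ^ d - 1)" using cardFs ee_mult q_def by simp
  have sub: "\<phi> ` Fs \<subseteq> R"
  proof
    fix y assume "y \<in> \<phi> ` Fs"
    then obtain z where z: "z \<in> Fs" "y = \<phi> z" by auto
    have zz: "z \<noteq> 0" "z ^ q = z" using z unfolding Fs_def Fq_def by auto
    obtain s :: nat where s: "2 ^ j - 1 = ((2::nat) ^ d - 1) * s" using geom2_dvd[OF d_dvd(2)] by (auto simp: dvd_def)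
    have "y ^ ee = z ^ ((2 ^ j - 1) * ee)" unfolding z(2) \<phi>_def by (simp add: power_mult)
    also have "(2 ^ j - 1) * ee = (2 ^ m - 1) * s" using s ee_mult by (metis mult.commute mult.left_commute)
    also have "z ^ ((2 ^ m - 1) * s) = 1" using Fq_unit[OF zz(2) zz(1)] by (simp add: power_mult)
    finally show "y \<in> R" unfolding R_def by simp
  qed
  have "card (\<phi> ` Fs) \<le> card R" using sub by (intro card_mono) (auto simp: R_def)
  hence "card (\<phi> ` Fs) \<le> ee" using cardR by simp
  moreover have "ee \<le> card (\<phi> ` Fs)" using le1 d1 by simp
  ultimately have "card (\<phi> ` Fs) = card R" using cardR \<open>card (\<phi> ` Fs) \<le> card R\<close> by simp
  hence "\<phi> ` Fs = R" using sub by (intro card_subset_eq) (auto simp: R_def)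
  moreover have "a \<in> R" using N1 unfolding R_def a_def by simp
  ultimately obtain z where z: "z \<in> Fs" "\<phi> z = a" by blast
  have zz: "z \<noteq> 0" "z ^ q = z" using z unfolding Fs_def Fq_def by auto
  have "L z = A * z ^ (2 ^ j) + B * z" unfolding L_def using pow_i_j[OF zz(2)] by simp
  also have "z ^ (2 ^ j) = a * z" using pow_pred[of z j] z(2) unfolding \<phi>_def by simp
  also have "A * (a * z) = B * z" using Aa by (simp add: mult.assoc[symmetric])
  finally have "L z = 0" by (simp add: add_self)
  moreover have "L 0 = 0" unfolding L_def using d_pos by simp
  moreover have "inj_on L Fq" by (rule bij_inj_L[OF bij])
  moreover have "z \<in> Fq" "0 \<in> Fq" using z q_gt1 unfolding Fs_def Fq_def by auto
  ultimately show False using zz(1) by (metis inj_on_def)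
qed

end


context ctx
begin

lemma case4:
  assumes i: "i \<notin> {0, m}" and AB: "A * B \<noteq> 0"
  shows "(bij P \<longleftrightarrow> gf_norm m d (B / A) \<noteq> 1) \<and>
         (gf_norm m d (B / A) \<noteq> 1 \<longrightarrow> is_comp_inverse P
            (\<lambda>x. G (\<delta> + gf_norm m d (B / A) / (1 + gf_norm m d (B / A)) *
                 (\<Sum>k<m div d. (A / B) ^ ((2 ^ ((k + 1) * j) - 1) div (2 ^ j - 1))
                                 * ((x ^ q + x) / A + C / A) ^ (2 ^ (k * j)))) + x))"
proof -
  have A0: "A \<noteq> 0" and B0: "B \<noteq> 0" using AB by auto
  have gn: "gf_norm m d (B / A) = (B / A) ^ ee" unfolding gf_norm_def ee_def ..
  have j0: "0 < j" using j_facts[OF i] by simp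
  have ex: "(2 ^ ((k + 1) * j) - 1) div (2 ^ j - 1) = ff (Suc k)" for k
    unfolding ff_def using geom2_div[OF j0, of "Suc k"] by simp
  have fun_eq: "(\<lambda>x. G (\<delta> + gf_norm m d (B / A) / (1 + gf_norm m d (B / A)) *
                 (\<Sum>k<m div d. (A / B) ^ ((2 ^ ((k + 1) * j) - 1) div (2 ^ j - 1))
                                 * ((x ^ q + x) / A + C / A) ^ (2 ^ (k * j)))) + x)
     = (\<lambda>c. G ((B / A) ^ ee / (1 + (B / A) ^ ee) *
                 (\<Sum>k<nn. (A / B) ^ ff (Suc k) * ((c ^ q + c) / A + C / A) ^ (2 ^ (k * j))) + \<delta>) + c)"
    unfolding gn ex nn_def by (simp add: add.commute)
  show ?thesis
    unfolding fun_eq unfolding gn using case4_inv[OF i A0 B0] case4_noninj[OF A0 B0] by blast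
qed

lemma main:
  shows
    "(i \<in> {0, m} \<longrightarrow>
        ((bij P \<longleftrightarrow> A + B \<noteq> 0) \<and>
         (A + B \<noteq> 0 \<longrightarrow> is_comp_inverse P
            (\<lambda>x. G (inverse (A + B) * (x ^ q + x) + inverse (A + B) * C + \<delta>) + x))))
   \<and> (i \<notin> {0, m} \<and> A = 0 \<and> B \<noteq> 0 \<longrightarrow>
        bij P \<and> is_comp_inverse P (\<lambda>x. G (inverse B * (x ^ q + x) + inverse B * C + \<delta>) + x))
   \<and> (i \<notin> {0, m} \<and> A \<noteq> 0 \<and> B = 0 \<longrightarrow>
        bij P \<and> is_comp_inverse P
          (\<lambda>x. G (inverse A ^ (2 ^ (m - j)) * (x ^ q + x) ^ (2 ^ (m - j)) + (C / A) ^ (2 ^ (m - j)) + \<delta>) + x))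
   \<and> (i \<notin> {0, m} \<and> A * B \<noteq> 0 \<longrightarrow>
        ((bij P \<longleftrightarrow> gf_norm m d (B / A) \<noteq> 1) \<and>
         (gf_norm m d (B / A) \<noteq> 1 \<longrightarrow> is_comp_inverse P
            (\<lambda>x. G (\<delta> + gf_norm m d (B / A) / (1 + gf_norm m d (B / A)) *
                 (\<Sum>k<m div d. (A / B) ^ ((2 ^ ((k + 1) * j) - 1) div (2 ^ j - 1))
                                 * ((x ^ q + x) / A + C / A) ^ (2 ^ (k * j)))) + x))))"
  using case1 case2 case3 case4 by blast

end

theorem theorem3p16:
  fixes m i :: nat and \<delta> b1 b2 b3 :: "'a::{field,finite}"
  assumes m_pos: "0 < m"
    and card: "card (UNIV :: 'a set) = 2 ^ (2 * m)"
    and b1: "b1 ^ (2 ^ m) = b1" and b2: "b2 ^ (2 ^ m) = b2"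
    and i_lt: "i < 2 * m"
  defines "q \<equiv> (2::nat) ^ m"
    and "j \<equiv> i mod m"
  defines "d \<equiv> gcd m j"
    and "P \<equiv> (\<lambda>x::'a. b1 * (x ^ q + x + \<delta>) ^ (2 ^ i + q) + b2 * (x ^ q + x + \<delta>) ^ (2 ^ i + 1)
                       + b3 * (x ^ q + x + \<delta>) ^ (2 ^ i) + x)"
    and "A \<equiv> (\<delta> + \<delta> ^ q) * (b1 + b2) + b3 + b3 ^ q"
    and "B \<equiv> 1 + (\<delta> ^ (2 ^ i * q) + \<delta> ^ (2 ^ i)) * (b1 + b2)"
    and "C \<equiv> b1 * (\<delta> ^ (2 ^ i * q + 1) + \<delta> ^ (2 ^ i + q)) + b2 * (\<delta> ^ (2 ^ i * q + q) + \<delta> ^ (2 ^ i + 1))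
             + b3 ^ q * \<delta> ^ (2 ^ i * q) + b3 * \<delta> ^ (2 ^ i)"
    and "G \<equiv> (\<lambda>y::'a. b1 * y ^ (2 ^ i + q) + b2 * y ^ (2 ^ i + 1) + b3 * y ^ (2 ^ i))"
  shows
    "(i \<in> {0, m} \<longrightarrow>
        ((bij P \<longleftrightarrow> A + B \<noteq> 0) \<and>
         (A + B \<noteq> 0 \<longrightarrow> is_comp_inverse P
            (\<lambda>x. G (inverse (A + B) * (x ^ q + x) + inverse (A + B) * C + \<delta>) + x))))
   \<and> (i \<notin> {0, m} \<and> A = 0 \<and> B \<noteq> 0 \<longrightarrow>
        bij P \<and> is_comp_inverse P (\<lambda>x. G (inverse B * (x ^ q + x) + inverse B * C + \<delta>) + x))
   \<and> (i \<notin> {0, m} \<and> A \<noteq> 0 \<and> B = 0 \<longrightarrow>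
        bij P \<and> is_comp_inverse P
          (\<lambda>x. G (inverse A ^ (2 ^ (m - j)) * (x ^ q + x) ^ (2 ^ (m - j)) + (C / A) ^ (2 ^ (m - j)) + \<delta>) + x))
   \<and> (i \<notin> {0, m} \<and> A * B \<noteq> 0 \<longrightarrow>
        ((bij P \<longleftrightarrow> gf_norm m d (B / A) \<noteq> 1) \<and>
         (gf_norm m d (B / A) \<noteq> 1 \<longrightarrow> is_comp_inverse P
            (\<lambda>x. G (\<delta> + gf_norm m d (B / A) / (1 + gf_norm m d (B / A)) *
                 (\<Sum>k<m div d. (A / B) ^ ((2 ^ ((k + 1) * j) - 1) div (2 ^ j - 1))
                                 * ((x ^ q + x) / A + C / A) ^ (2 ^ (k * j)))) + x))))"
proof -
  interpret ctx m i \<delta> b1 b2 b3 q j d A B C P G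
    by (rule ctx.intro) (simp_all add: m_pos card b1 b2 i_lt q_def j_def d_def P_def A_def B_def C_def G_def)
  show ?thesis by (rule main)
qed


end
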